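(* Let $\pi\colon\mathsf{States}\to\mathbb{R}_{\ge0}$ be a potential function. Then $\mathsf{aert}_\pi$ is $\omega$-continuous: for every program $C$ and every $\omega$-chain $F=\{X_1\preceq X_2\preceq\cdots\}$ in $\mathbb{A}_\pi$, $$\mathsf{aert}_\pi[\![C]\!](\sup F)\;=\;\sup\{\mathsf{aert}_\pi[\![C]\!](X)\mid X\in F\}.$$
   Context: States and programs. Fix a finite set $\mathrm{Vars}$ of variables; values are $\mathbb{N}$, locations are $\mathbb{N}_{>0}$. A stack is $s\colon \mathrm{Vars}\to\mathbb{N}$; a heap is a partial map $h$ from a finite set $\mathrm{dom}(h)\subseteq\mathbb{N}_{>0}$ to $\mathbb{N}$. $h_1\perp h_2$ means disjoint domains; then $h_1\star h_2$ is their union; $h_\emptyset$ is the empty heap. $\mathsf{States}$ is the set of pairs $(s,h)$. $s(e)$ is the value of a (heap-independent) arithmetic expression $e$ under $s$, $s\models\varphi$ means the Boolean expression $\varphi$ holds under $s$, $s[x\mapsto v]$ is the updated stack. Programs are generated by $C ::= \mathtt{tick}(e) \mid x:=e \mid x:=\mathtt{alloc}(e) \mid \langle e\rangle:=e' \mid x:=\langle e\rangle \mid \mathtt{free}(e) \mid \{C\}[p]\{C\} \mid \mathtt{if}(\varphi)\{C\}\mathtt{else}\{C\} \mid C;C \mid \mathtt{while}(\varphi)\{C\}$, where $p$ is an expression with $s(p)\in[0,1]\cap\mathbb{Q}$ for all $s$. The statements other than tick, probabilistic choice, conditional, sequencing and loops are called atomic. Runtimes. $\mathbb{T}$ is the set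 of functions $\mathsf{States}\to[0,\infty]$, ordered pointwise by $\preceq$; arithmetic is pointwise with $0\cdot\infty=0$. $[\varphi]$ is the $0/1$-valued Iverson bracket. Truncated subtraction: $a\dot- b=\max(a-b,0)$, $\infty\dot- b=\infty$ for finite $b$, $a\dot-\infty=0$. $(f\oplus g)(s,h)=\min\{f(s,h_1)+g(s,h_2)\mid h=h_1\star h_2\}$; $(f \mathbin{-\!\!\ominus} g)(s,h)=\sup\{g(s,h\star h')\dot- f(s,h')\mid h'\perp h\}$; $(\inf y\colon f)(s,h)=\inf_{v\in\mathbb{N}} f(s[y\mapsto v],h)$, $(\sup y\colon f)(s,h)=\sup_{v\in\mathbb{N}}f(s[y\mapsto v],h)$; $f[x/e](s,h)=f(s[x\mapsto s(e)],h)$. $\mathsf{tm}(e)(s,h)=s(e)$ if $h=h_\emptyset$, else $\infty$; $[e\mapsto e'](s,h)=0$ if $\mathrm{dom}(h)=\{s(e)\}$ and $h(s(e))=s(e')$, else $\infty$; $[e\mapsto -](s,h)=0$ if $\mathrm{dom}(h)=\{s(e)\}$, else $\infty$; $\bigoplus_{i=1}^{e} f_i$ is the separating sum over $i=1,\dots,s(e)$ (empty one: $[\mathsf{emp}]$, which is $0$ if $h=h_\emptyset$, else $\infty$). $\mathsf{ert}[\![C]\!]\colon\mathbb{T}\to\mathbb{T}$ (with $v$ fresh): $\mathsf{ert}[\![\mathtt{tick}(e)]\!](f)=\mathsf{tm}(e)\oplus f$; $\mathsf{ert}[\![x:=e]\!](f)=f[x/e]$; $\mathsf{ert}[\![x:=\mathtt{alloc}(e)]\!](f)=\sup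 v\colon (\bigoplus_{i=1}^{e}[v+i-1\mapsto 0])\mathbin{-\!\!\ominus} f[x/v]$; $\mathsf{ert}[\![\langle e\rangle:=e']\!](f)=[e\mapsto-]\oplus([e\mapsto e']\mathbin{-\!\!\ominus} f)$; $\mathsf{ert}[\![x:=\langle e\rangle]\!](f)=\inf v\colon [e\mapsto v]\oplus([e\mapsto v]\mathbin{-\!\!\ominus} f[x/v])$; $\mathsf{ert}[\![\mathtt{free}(e)]\!](f)=[e\mapsto-]\oplus f$; $\mathsf{ert}[\![C_1;C_2]\!](f)=\mathsf{ert}[\![C_1]\!](\mathsf{ert}[\![C_2]\!](f))$; conditional: $[\varphi]\cdot\mathsf{ert}[\![C_1]\!](f)+[\neg\varphi]\cdot\mathsf{ert}[\![C_2]\!](f)$; probabilistic choice: $p\cdot\mathsf{ert}[\![C_1]\!](f)+(1-p)\cdot\mathsf{ert}[\![C_2]\!](f)$; $\mathsf{ert}[\![\mathtt{while}(\varphi)\{C\}]\!](f)=\mathrm{lfp}\, g.\ [\neg\varphi]\cdot f+[\varphi]\cdot\mathsf{ert}[\![C]\!](g)$. Amortized runtimes. A potential function is $\pi\colon\mathsf{States}\to\mathbb{R}_{\ge0}$. $\mathbb{A}_\pi=\{X\colon\mathsf{States}\to\mathbb{R}\cup\{\infty\}\mid -\pi\le X\}$, ordered pointwise by $\preceq$ (complete lattice, least element $-\pi$; suprema are pointwise). $\mathsf{aert}_\pi[\![C]\!]\colon\mathbb{A}_\pi\to\mathbb{A}_\pi$: $\mathsf{aert}_\pi[\![\mathtt{tick}(e)]\!](X)=e+X$;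 for atomic $C$ other than tick, $\mathsf{aert}_\pi[\![C]\!](X)=\mathsf{ert}[\![C]\!](X+\pi)-\pi$; sequencing by composition; conditional $[\varphi]\cdot\mathsf{aert}_\pi[\![C_1]\!](X)+[\neg\varphi]\cdot\mathsf{aert}_\pi[\![C_2]\!](X)$; probabilistic choice $p\cdot\mathsf{aert}_\pi[\![C_1]\!](X)+(1-p)\cdot\mathsf{aert}_\pi[\![C_2]\!](X)$; $\mathsf{aert}_\pi[\![\mathtt{while}(\varphi)\{C'\}]\!](X)=\mathrm{lfp}\,Y.\ [\neg\varphi]\cdot X+[\varphi]\cdot\mathsf{aert}_\pi[\![C']\!](Y)$ in $(\mathbb{A}_\pi,\preceq)$. *)

theory Defs
  imports Complex_Main "HOL-Library.Extended_Nonnegative_Real" "HOL-Library.Extended_Real"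
begin

type_synonym 'v stack = "'v \<Rightarrow> nat"

typedef heap = "{h :: nat \<rightharpoonup> nat. finite (dom h) \<and> 0 \<notin> dom h}"
  morphisms hmap Abs_heap
  by (rule exI[of _ Map.empty]) simp

type_synonym 'v state = "'v stack \<times> heap"

type_synonym 'v rt = "'v state \<Rightarrow> ennreal"
type_synonym 'v art = "'v state \<Rightarrow> ereal"

type_synonym 'v aexp = "'v stack \<Rightarrow> nat"
type_synonym 'v bexp = "'v stack \<Rightarrow> bool"
type_synonym 'v pexp = "'v stack \<Rightarrow> rat"

definition hemp :: heap where "hemp = Abs_heap Map.empty"

definition hdisj :: "heap \<Rightarrow> heap \<Rightarrow> bool" where
  "hdisj h1 h2 \<longleftrightarrow> dom (hmap h1) \<inter> dom (hmap h2) = {}"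

definition hunion :: "heap \<Rightarrow> heap \<Rightarrow> heap" where
  "hunion h1 h2 = Abs_heap (hmap h1 ++ hmap h2)"

datatype 'v prog =
    Tick "'v aexp"
  | Assign 'v "'v aexp"
  | Alloc 'v "'v aexp"
  | Store "'v aexp" "'v aexp"
  | Load 'v "'v aexp"
  | Free "'v aexp"
  | PChoice "'v prog" "'v pexp" "'v prog"
  | If "'v bexp" "'v prog" "'v prog"
  | Seq "'v prog" "'v prog"
  | While "'v bexp" "'v prog"

text \<open>Well-formedness: probabilities p satisfy s(p) \<in> [0,1] \<inter> Q for all s (rationality via type rat).\<close>
fun wf_prog :: "'v prog \<Rightarrow> bool" where
  "wf_prog (PChoice C1 p C2) \<longleftrightarrow> (\<forall>s. 0 \<le> p s \<and> p s \<le> 1) \<and> wf_prog C1 \<and> wf_prog C2"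
| "wf_prog (If b C1 C2) \<longleftrightarrow> wf_prog C1 \<and> wf_prog C2"
| "wf_prog (Seq C1 C2) \<longleftrightarrow> wf_prog C1 \<and> wf_prog C2"
| "wf_prog (While b C) \<longleftrightarrow> wf_prog C"
| "wf_prog _ \<longleftrightarrow> True"

definition tsub :: "ennreal \<Rightarrow> ennreal \<Rightarrow> ennreal" where
  "tsub a b = (if b = \<infinity> then 0 else a - b)"

definition sepcon :: "'v rt \<Rightarrow> 'v rt \<Rightarrow> 'v rt" where
  "sepcon f g = (\<lambda>(s, h). Inf {f (s, h1) + g (s, h2) | h1 h2. hdisj h1 h2 \<and> h = hunion h1 h2})"

definition wand :: "'v rt \<Rightarrow> 'v rt \<Rightarrow> 'v rt" where
  "wand f g = (\<lambda>(s, h). Sup {tsub (g (s, hunion h h')) (f (s, h')) | h'. hdisj h' h})"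

text \<open>inf / sup over the value of a fresh variable, rendered as quantification over values.\<close>
definition infv :: "(nat \<Rightarrow> 'v rt) \<Rightarrow> 'v rt" where
  "infv F = (\<lambda>\<sigma>. INF v. F v \<sigma>)"

definition supv :: "(nat \<Rightarrow> 'v rt) \<Rightarrow> 'v rt" where
  "supv F = (\<lambda>\<sigma>. SUP v. F v \<sigma>)"

definition rsubst :: "'v rt \<Rightarrow> 'v \<Rightarrow> 'v aexp \<Rightarrow> 'v rt" where
  "rsubst f x e = (\<lambda>(s, h). f (s(x := e s), h))"

definition tm :: "'v aexp \<Rightarrow> 'v rt" where
  "tm e = (\<lambda>(s, h). if h = hemp then of_nat (e s) else \<infinity>)"

definition pto :: "'v aexp \<Rightarrow> 'v aexp \<Rightarrow> 'v rt" where
  "pto e e' = (\<lambda>(s, h). if dom (hmap h) = {e s} \<and> hmap h (e s) = Some (e' s) then 0 else \<infinity>)"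

definition pto_any :: "'v aexp \<Rightarrow> 'v rt" where
  "pto_any e = (\<lambda>(s, h). if dom (hmap h) = {e s} then 0 else \<infinity>)"

definition emp :: "'v rt" where
  "emp = (\<lambda>(s, h). if h = hemp then 0 else \<infinity>)"

fun bigsep :: "nat \<Rightarrow> (nat \<Rightarrow> 'v rt) \<Rightarrow> 'v rt" where
  "bigsep 0 F = emp"
| "bigsep (Suc n) F = sepcon (bigsep n F) (F (Suc n))"

definition bigsep_e :: "'v aexp \<Rightarrow> (nat \<Rightarrow> 'v rt) \<Rightarrow> 'v rt" where
  "bigsep_e e F = (\<lambda>(s, h). bigsep (e s) F (s, h))"

fun ert :: "'v prog \<Rightarrow> 'v rt \<Rightarrow> 'v rt" where
  "ert (Tick e) f = sepcon (tm e) f"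
| "ert (Assign x e) f = rsubst f x e"
| "ert (Alloc x e) f =
     supv (\<lambda>v. wand (bigsep_e e (\<lambda>i. pto (\<lambda>_. v + i - 1) (\<lambda>_. 0))) (rsubst f x (\<lambda>_. v)))"
| "ert (Store e e') f = sepcon (pto_any e) (wand (pto e e') f)"
| "ert (Load x e) f =
     infv (\<lambda>v. sepcon (pto e (\<lambda>_. v)) (wand (pto e (\<lambda>_. v)) (rsubst f x (\<lambda>_. v))))"
| "ert (Free e) f = sepcon (pto_any e) f"
| "ert (PChoice C1 p C2) f =
     (\<lambda>\<sigma>. ennreal (real_of_rat (p (fst \<sigma>))) * ert C1 f \<sigma>
         + ennreal (1 - real_of_rat (p (fst \<sigma>))) * ert C2 f \<sigma>)"
| "ert (If b C1 C2) f = (\<lambda>\<sigma>. if b (fst \<sigma>) then ert C1 f \<sigma> else ert C2 f \<sigma>)"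
| "ert (Seq C1 C2) f = ert C1 (ert C2 f)"
| "ert (While b C) f = lfp (\<lambda>g \<sigma>. if b (fst \<sigma>) then ert C g \<sigma> else f \<sigma>)"

definition inA :: "('v state \<Rightarrow> real) \<Rightarrow> 'v art \<Rightarrow> bool" where
  "inA \<pi> X \<longleftrightarrow> (\<forall>\<sigma>. - ereal (\<pi> \<sigma>) \<le> X \<sigma>)"

text \<open>Least fixed point in the complete lattice (A_pi, \<le>) (Knaster--Tarski);
  infima in A_pi of nonempty sets are pointwise, the empty infimum is the constant \<infinity>.\<close>
definition lfpA :: "('v state \<Rightarrow> real) \<Rightarrow> ('v art \<Rightarrow> 'v art) \<Rightarrow> 'v art" where
  "lfpA \<pi> \<Phi> = Inf {Y. inA \<pi> Y \<and> \<Phi> Y \<le> Y}"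

definition alift :: "('v state \<Rightarrow> real) \<Rightarrow> ('v rt \<Rightarrow> 'v rt) \<Rightarrow> 'v art \<Rightarrow> 'v art" where
  "alift \<pi> T X = (\<lambda>\<sigma>. enn2ereal (T (\<lambda>\<sigma>'. e2ennreal (X \<sigma>' + ereal (\<pi> \<sigma>'))) \<sigma>) - ereal (\<pi> \<sigma>))"

fun aert :: "('v state \<Rightarrow> real) \<Rightarrow> 'v prog \<Rightarrow> 'v art \<Rightarrow> 'v art" where
  "aert \<pi> (Tick e) X = (\<lambda>\<sigma>. ereal (real (e (fst \<sigma>))) + X \<sigma>)"
| "aert \<pi> (Assign x e) X = alift \<pi> (ert (Assign x e)) X"
| "aert \<pi> (Alloc x e) X = alift \<pi> (ert (Alloc x e)) X"
| "aert \<pi> (Store e e') X = alift \<pi> (ert (Store e e')) X"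
| "aert \<pi> (Load x e) X = alift \<pi> (ert (Load x e)) X"
| "aert \<pi> (Free e) X = alift \<pi> (ert (Free e)) X"
| "aert \<pi> (PChoice C1 p C2) X =
     (\<lambda>\<sigma>. ereal (real_of_rat (p (fst \<sigma>))) * aert \<pi> C1 X \<sigma>
         + ereal (1 - real_of_rat (p (fst \<sigma>))) * aert \<pi> C2 X \<sigma>)"
| "aert \<pi> (If b C1 C2) X = (\<lambda>\<sigma>. if b (fst \<sigma>) then aert \<pi> C1 X \<sigma> else aert \<pi> C2 X \<sigma>)"
| "aert \<pi> (Seq C1 C2) X = aert \<pi> C1 (aert \<pi> C2 X)"
| "aert \<pi> (While b C) X = lfpA \<pi> (\<lambda>Y \<sigma>. if b (fst \<sigma>) then aert \<pi> C Y \<sigma> else X \<sigma>)"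

end

theory Submission
  imports Defs
begin


lemma SUP_app: "(SUP i. g i) x = (SUP i. g i x)"
  by (simp add: image_comp)

lemma hmap_hunion: "hmap (hunion h1 h2) = hmap h1 ++ hmap h2"
  unfolding hunion_def
  using hmap[of h1] hmap[of h2] by (intro Abs_heap_inverse) auto

lemma hmap_hemp: "hmap hemp = Map.empty"
  unfolding hemp_def by (intro Abs_heap_inverse) auto

lemma split_unique:
  assumes "hdisj h1 h2" "h = hunion h1 h2" "hdisj h1' h2'" "h = hunion h1' h2'"
    "dom (hmap h1) = dom (hmap h1')"
  shows "h1 = h1' \<and> h2 = h2'"
proof -
  have e: "hmap h1 ++ hmap h2 = hmap h1' ++ hmap h2'" using assms(2,4) hmap_hunion by metis
  have d1: "dom (hmap h1) \<inter> dom (hmap h2) = {}" "dom (hmap h1') \<inter> dom (hmap h2') = {}"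
    using assms(1,3) unfolding hdisj_def by auto
  have "hmap h1 = hmap h1'"
  proof
    fix x show "hmap h1 x = hmap h1' x"
    proof (cases "x \<in> dom (hmap h1)")
      case True
      then have "x \<notin> dom (hmap h2)" "x \<notin> dom (hmap h2')" using d1 assms(5) by auto
      then show ?thesis using fun_cong[OF e, of x] by (auto simp: map_add_def split: option.splits)
    next
      case False
      then show ?thesis using assms(5) by (auto simp: domIff)
    qed
  qed
  moreover have "hmap h2 = hmap h2'"
  proof
    fix x show "hmap h2 x = hmap h2' x"
    proof (cases "x \<in> dom (hmap h1)")
      case True
      then have "x \<notin> dom (hmap h2)" "x \<notin> dom (hmap h2')" using d1 assms(5) by auto
      then show ?thesis by (auto simp: domIff)
    next
      case False
      then have "x \<notin> dom (hmap h1')" using assms(5) by auto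
      then show ?thesis using False fun_cong[OF e, of x] by (auto simp: map_add_def domIff split: option.splits)
    qed
  qed
  ultimately show ?thesis by (simp add: hmap_inject)
qed

definition precise :: "'v rt \<Rightarrow> bool" where
  "precise F \<longleftrightarrow> (\<forall>s h1 h1'. F (s,h1) \<noteq> \<infinity> \<longrightarrow> F (s,h1') \<noteq> \<infinity> \<longrightarrow> dom (hmap h1) = dom (hmap h1'))"

lemma sepcon_precise:
  assumes "precise F"
  shows "(\<exists>h1 h2. hdisj h1 h2 \<and> h = hunion h1 h2 \<and> F (s,h1) \<noteq> \<infinity> \<and>
             (\<forall>g. sepcon F g (s,h) = F (s,h1) + g (s,h2))) \<or> (\<forall>g. sepcon F g (s,h) = \<infinity>)"
proof (cases "\<exists>h1 h2. hdisj h1 h2 \<and> h = hunion h1 h2 \<and> F (s,h1) \<noteq> \<infinity>")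
  case True
  then obtain h1 h2 where hh: "hdisj h1 h2" "h = hunion h1 h2" "F (s,h1) \<noteq> \<infinity>" by blast
  have "sepcon F g (s,h) = F (s,h1) + g (s,h2)" for g
    unfolding sepcon_def
  proof (simp, intro antisym)
    show "Inf {F (s, h1) + g (s, h2) |h1 h2. hdisj h1 h2 \<and> h = hunion h1 h2} \<le> F (s, h1) + g (s, h2)"
      using hh by (intro Inf_lower) blast
    show "F (s, h1) + g (s, h2) \<le> Inf {F (s, h1) + g (s, h2) |h1 h2. hdisj h1 h2 \<and> h = hunion h1 h2}"
    proof (rule Inf_greatest, clarify)
      fix a b assume ab: "hdisj a b" "h = hunion a b"
      show "F (s, h1) + g (s, h2) \<le> F (s, a) + g (s, b)"
      proof (cases "F (s,a) = \<infinity>")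
        case True then show ?thesis by simp
      next
        case False
        then have "dom (hmap h1) = dom (hmap a)" using assms hh(3) unfolding precise_def by blast
        then have "h1 = a \<and> h2 = b" using split_unique[OF hh(1,2) ab] by blast
        then show ?thesis by simp
      qed
    qed
  qed
  then show ?thesis using hh by blast
next
  case False
  have "sepcon F g (s,h) = \<infinity>" for g
    unfolding sepcon_def using False by (auto intro!: Inf_eqI simp: top_unique)
  then show ?thesis by blast
qed

lemma sepcon_cont:
  assumes "precise F"
  shows "sepcon F (SUP i. g i) \<sigma> = (SUP i. sepcon F (g i) \<sigma>)"
proof -
  obtain s h where \<sigma>: "\<sigma> = (s,h)" by fastforce
  from sepcon_precise[OF assms, of h s] show ?thesis
  proof
    assume "\<exists>h1 h2. hdisj h1 h2 \<and> h = hunion h1 h2 \<and> F (s,h1) \<noteq> \<infinity> \<and>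
             (\<forall>g. sepcon F g (s,h) = F (s,h1) + g (s,h2))"
    then obtain h1 h2 where "\<forall>g. sepcon F g (s,h) = F (s,h1) + g (s,h2)" by blast
    then show ?thesis unfolding \<sigma> by (simp only: SUP_app) (rule ennreal_SUP_add_right, simp)
  qed (simp add: \<sigma>)
qed

lemma precise_tm: "precise (tm e)"
  unfolding precise_def tm_def by (auto simp: hmap_hemp split: if_splits)
lemma precise_pto: "precise (pto e e')"
  unfolding precise_def pto_def by (auto split: if_splits)
lemma precise_pto_any: "precise (pto_any e)"
  unfolding precise_def pto_any_def by (auto split: if_splits)

lemma ennreal_SUP_minus:
  fixes a :: "'b \<Rightarrow> ennreal"
  assumes "c \<noteq> \<infinity>"
  shows "(SUP i. a i) - c = (SUP i. a i - c)"
proof (rule antisym)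
  have "a i \<le> c + (SUP i. a i - c)" for i
  proof -
    have "a i \<le> c + (a i - c)"
      using ennreal_minus_le_iff by blast
    also have "\<dots> \<le> c + (SUP i. a i - c)" by (intro add_left_mono SUP_upper) auto
    finally show ?thesis .
  qed
  then show "(SUP i. a i) - c \<le> (SUP i. a i - c)"
    using assms by (subst ennreal_minus_le_iff) (auto intro: SUP_least)
  show "(SUP i. a i - c) \<le> (SUP i. a i) - c"
    by (intro SUP_least ennreal_minus_mono SUP_upper) auto
qed

lemma tsub_SUP: "tsub (SUP i. a i) b = (SUP i. tsub (a i) b)"
  using ennreal_SUP_minus[of b a] by (simp add: tsub_def)

lemma rsubst_SUP: "rsubst (SUP i. f i) x e = (SUP i. rsubst (f i) x e)"
proof (rule ext)
  fix \<sigma> :: "'a state"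
  obtain s h where \<sigma>: "\<sigma> = (s,h)" by fastforce
  show "rsubst (SUP i. f i) x e \<sigma> = (SUP i. rsubst (f i) x e) \<sigma>"
    unfolding \<sigma> by (simp only: SUP_app rsubst_def case_prod_conv)
qed

lemma wand_SUP: "wand F (SUP i. g i) = (SUP i. wand F (g i))"
proof (rule ext)
  fix \<sigma> :: "'a state"
  obtain s h where \<sigma>: "\<sigma> = (s,h)" by fastforce
  have "wand F (SUP i. g i) (s,h) = (SUP h'\<in>{h'. hdisj h' h}. SUP i. tsub (g i (s, hunion h h')) (F (s, h')))"
    unfolding wand_def by (simp only: SUP_app setcompr_eq_image image_image case_prod_conv)
       (intro SUP_cong refl tsub_SUP)
  also have "\<dots> = (SUP i. SUP h'\<in>{h'. hdisj h' h}. tsub (g i (s, hunion h h')) (F (s, h')))"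
    by (rule SUP_commute)
  also have "\<dots> = (SUP i. wand F (g i)) (s,h)"
    unfolding wand_def by (simp only: SUP_app setcompr_eq_image image_image case_prod_conv)
  finally show "wand F (SUP i. g i) \<sigma> = (SUP i. wand F (g i)) \<sigma>" by (simp add: \<sigma>)
qed



lemma sepcon_SUP: "precise F \<Longrightarrow> sepcon F (SUP i. g i) = (SUP i. sepcon F (g i))"
  by (rule ext) (simp only: SUP_app sepcon_cont)

lemma supv_SUP: "supv (\<lambda>v. SUP i. G v i) = (SUP i. supv (\<lambda>v. G v i))"
  by (rule ext) (simp only: supv_def SUP_app, rule SUP_commute)

lemma load_infty:
  assumes "hmap h (e s) \<noteq> Some v"
  shows "sepcon (pto e (\<lambda>_. v)) g (s,h) = \<infinity>"
proof -
  from sepcon_precise[where F="pto e (\<lambda>_. v)" and h=h and s=s, OF precise_pto]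
  show ?thesis
  proof
    assume "\<exists>h1 h2. hdisj h1 h2 \<and> h = hunion h1 h2 \<and> pto e (\<lambda>_. v) (s, h1) \<noteq> \<infinity> \<and>
            (\<forall>g. sepcon (pto e (\<lambda>_. v)) g (s, h) = pto e (\<lambda>_. v) (s, h1) + g (s, h2))"
    then obtain h1 h2 where hh: "hdisj h1 h2" "h = hunion h1 h2" "pto e (\<lambda>_. v) (s, h1) \<noteq> \<infinity>" by blast
    then have "hmap h1 (e s) = Some v" by (auto simp: pto_def split: if_splits)
    then have "hmap h (e s) = Some v" using hh(1,2) by (auto simp: hmap_hunion hdisj_def map_add_def split: option.splits)
    with assms show ?thesis by simp
  qed simp
qed

lemma INF_single:
  fixes a :: "nat \<Rightarrow> ennreal"
  assumes "\<And>v. v \<noteq> v0 \<Longrightarrow> a v = \<infinity>"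
  shows "(INF v. a v) = a v0"
proof (rule antisym)
  show "(INF v. a v) \<le> a v0" by (rule INF_lower) simp
  show "a v0 \<le> (INF v. a v)"
  proof (rule INF_greatest)
    fix v show "a v0 \<le> a v" by (cases "v = v0") (simp_all add: assms)
  qed
qed

lemma ert_Load_SUP: "ert (Load x e) (SUP i. f i) = (SUP i. ert (Load x e) (f i))"
proof (rule ext)
  fix \<sigma> :: "'a state"
  obtain s h where \<sigma>: "\<sigma> = (s,h)" by fastforce
  define G where "G = (\<lambda>v g. sepcon (pto e (\<lambda>_. v)) (wand (pto e (\<lambda>_. v)) (rsubst g x (\<lambda>_. v))) (s,h))"
  have L: "ert (Load x e) g (s,h) = (INF v. G v g)" for g
    by (simp add: G_def infv_def)
  have Gc: "G v (SUP i. f i) = (SUP i. G v (f i))" for v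
    unfolding G_def rsubst_SUP wand_SUP by (rule sepcon_cont[OF precise_pto])
  show "ert (Load x e) (SUP i. f i) \<sigma> = (SUP i. ert (Load x e) (f i)) \<sigma>"
  proof (cases "\<exists>v0. hmap h (e s) = Some v0")
    case True
    then obtain v0 where v0: "hmap h (e s) = Some v0" by blast
    have I: "(INF v. G v g) = G v0 g" for g
      by (rule INF_single) (metis G_def load_infty v0 option.inject)
    have "ert (Load x e) (SUP i. f i) (s,h) = G v0 (SUP i. f i)" by (simp only: L I)
    also have "\<dots> = (SUP i. G v0 (f i))" by (rule Gc)
    also have "\<dots> = (SUP i. ert (Load x e) (f i) (s,h))" by (simp only: L I)
    finally show ?thesis unfolding \<sigma> SUP_app .
  next
    case False
    have I: "(INF v. G v g) = \<infinity>" for g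
      using False by (simp add: G_def load_infty)
    show ?thesis unfolding \<sigma> SUP_app L I by simp
  qed
qed

lemmas atomic_simps = ert.simps sepcon_SUP precise_tm precise_pto precise_pto_any rsubst_SUP
      wand_SUP supv_SUP

lemma enn2ereal_SUP: "enn2ereal (SUP i. f i) = (SUP i. enn2ereal (f i))"
proof -
  have 1: "enn2ereal (SUP i. f i) = sup 0 (SUP i. enn2ereal (f i))"
    by (simp only: Sup_ennreal.rep_eq image_comp comp_def)
  have "0 \<le> enn2ereal (f undefined)" by (rule enn2ereal_nonneg)
  also have "\<dots> \<le> (SUP i. enn2ereal (f i))" by (rule SUP_upper) simp
  finally show ?thesis unfolding 1 by (rule sup_absorb2)
qed
lemma enn2e2: "enn2ereal (e2ennreal x) = max 0 x"
proof -
  have "e2ennreal x = e2ennreal (max 0 x)" by (simp add: e2ennreal_def)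
  then show ?thesis by (simp add: enn2ereal_e2ennreal)
qed
lemma e2ennreal_SUP: "e2ennreal (SUP i. f i) = (SUP i. e2ennreal (f i))"
proof -
  have "max 0 (SUP i. f i) = (SUP i. max 0 (f i))"
    using SUP_sup_const1[of UNIV 0 f] by (simp add: sup_max)
  then have "enn2ereal (e2ennreal (SUP i. f i)) = enn2ereal (SUP i. e2ennreal (f i))"
    by (simp only: enn2e2 enn2ereal_SUP)
  then show ?thesis by (metis e2ennreal_enn2ereal)
qed


lemma mono_from_SUP:
  assumes c: "\<And>F::nat \<Rightarrow> 'a::complete_lattice. T (SUP i. F i) = (SUP i. T (F i))" and le: "f \<le> g"
  shows "T f \<le> (T g :: 'b::complete_lattice)"
proof -
  define F where "F = (\<lambda>i::nat. if i = 0 then f else g)"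
  have "(SUP i. F i) = g"
  proof (rule antisym)
    show "(SUP i. F i) \<le> g" by (rule SUP_least) (simp add: F_def le)
    show "g \<le> (SUP i. F i)" by (rule SUP_upper2[of 1]) (simp_all add: F_def)
  qed
  then have "T g = (SUP i. T (F i))" using c by metis
  moreover have "T (F 0) \<le> (SUP i. T (F i))" by (rule SUP_upper) simp
  ultimately show ?thesis by (simp add: F_def)
qed

lemma alift_SUP:
  assumes c: "\<And>F::nat \<Rightarrow> 'v rt. T (SUP i. F i) = (SUP i. T (F i))"
  shows "alift \<pi> T (SUP i::nat. X i) = (SUP i. alift \<pi> T (X i))"
proof (rule ext)
  fix \<sigma> :: "'v state"
  have 1: "(\<lambda>\<sigma>'. e2ennreal ((SUP i. X i) \<sigma>' + ereal (\<pi> \<sigma>'))) = (SUP i. (\<lambda>\<sigma>'. e2ennreal (X i \<sigma>' + ereal (\<pi> \<sigma>'))))"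
  proof (rule ext)
    fix \<sigma>'
    have "(SUP i. X i) \<sigma>' + ereal (\<pi> \<sigma>') = (SUP i. X i \<sigma>' + ereal (\<pi> \<sigma>'))"
      by (simp only: SUP_app) (rule SUP_ereal_add_left[symmetric], auto)
    then show "e2ennreal ((SUP i. X i) \<sigma>' + ereal (\<pi> \<sigma>')) = (SUP i. (\<lambda>\<sigma>'. e2ennreal (X i \<sigma>' + ereal (\<pi> \<sigma>')))) \<sigma>'"
      by (simp only: SUP_app e2ennreal_SUP)
  qed
  have eq: "T (\<lambda>\<sigma>'. e2ennreal ((SUP i. X i) \<sigma>' + ereal (\<pi> \<sigma>'))) = (SUP i. T (\<lambda>\<sigma>'. e2ennreal (X i \<sigma>' + ereal (\<pi> \<sigma>'))))"
    by (subst 1) (rule c)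
  have "alift \<pi> T (SUP i. X i) \<sigma> = enn2ereal ((SUP i. T (\<lambda>\<sigma>'. e2ennreal (X i \<sigma>' + ereal (\<pi> \<sigma>')))) \<sigma>) - ereal (\<pi> \<sigma>)"
    unfolding alift_def by (subst eq) (rule refl)
  also have "\<dots> = (SUP i. enn2ereal (T (\<lambda>\<sigma>'. e2ennreal (X i \<sigma>' + ereal (\<pi> \<sigma>'))) \<sigma>)) - ereal (\<pi> \<sigma>)"
    by (simp only: SUP_app enn2ereal_SUP)
  also have "\<dots> = (SUP i. enn2ereal (T (\<lambda>\<sigma>'. e2ennreal (X i \<sigma>' + ereal (\<pi> \<sigma>'))) \<sigma>) - ereal (\<pi> \<sigma>))"
    by (rule SUP_ereal_minus_left[symmetric]) auto
  also have "\<dots> = (SUP i. alift \<pi> T (X i)) \<sigma>"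
    unfolding alift_def SUP_app ..
  finally show "alift \<pi> T (SUP i. X i) \<sigma> = (SUP i. alift \<pi> T (X i)) \<sigma>" .
qed

lemma alift_mono:
  assumes c: "\<And>F::nat \<Rightarrow> 'v rt. T (SUP i. F i) = (SUP i. T (F i))" and le: "X \<le> Y"
  shows "alift \<pi> T X \<le> alift \<pi> T Y"
proof -
  show ?thesis
    by (rule mono_from_SUP[where T="alift \<pi> T", OF alift_SUP[OF c] le])
qed

lemma alift_inA: "inA \<pi> (alift \<pi> T X)"
  unfolding inA_def alift_def
proof
  fix \<sigma>
  have "0 \<le> enn2ereal (T (\<lambda>\<sigma>'. e2ennreal (X \<sigma>' + ereal (\<pi> \<sigma>'))) \<sigma>)" by simp
  then show "- ereal (\<pi> \<sigma>) \<le> enn2ereal (T (\<lambda>\<sigma>'. e2ennreal (X \<sigma>' + ereal (\<pi> \<sigma>'))) \<sigma>) - ereal (\<pi> \<sigma>)"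
    by (cases "enn2ereal (T (\<lambda>\<sigma>'. e2ennreal (X \<sigma>' + ereal (\<pi> \<sigma>'))) \<sigma>)") auto
qed



lemma ert_Assign_SUP: "ert (Assign x e) (SUP i. f i) = (SUP i. ert (Assign x e) (f i))"
  by (simp only: ert.simps rsubst_SUP)
lemma ert_Alloc_SUP: "ert (Alloc x e) (SUP i. f i) = (SUP i. ert (Alloc x e) (f i))"
  by (simp only: ert.simps rsubst_SUP wand_SUP supv_SUP)
lemma ert_Store_SUP: "ert (Store e e') (SUP i. f i) = (SUP i. ert (Store e e') (f i))"
  by (simp only: ert.simps wand_SUP sepcon_SUP precise_pto_any)
lemma ert_Free_SUP: "ert (Free e) (SUP i. f i) = (SUP i. ert (Free e) (f i))"
  by (simp only: ert.simps sepcon_SUP precise_pto_any)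

lemma inA_le: "inA \<pi> Y \<longleftrightarrow> (\<lambda>\<sigma>. - ereal (\<pi> \<sigma>)) \<le> Y"
  by (simp add: inA_def le_fun_def)

lemma lfpA_inA: "inA \<pi> (lfpA \<pi> \<Phi>)"
  unfolding inA_le lfpA_def by (rule Inf_greatest) (simp add: inA_le)

lemma lfpA_lower: "inA \<pi> Y \<Longrightarrow> \<Phi> Y \<le> Y \<Longrightarrow> lfpA \<pi> \<Phi> \<le> Y"
  unfolding lfpA_def by (rule Inf_lower) simp

lemma lfpA_pre:
  assumes m: "\<And>Y Z. Y \<le> Z \<Longrightarrow> \<Phi> Y \<le> \<Phi> Z"
  shows "\<Phi> (lfpA \<pi> \<Phi>) \<le> lfpA \<pi> \<Phi>"
proof -
  have "\<Phi> (lfpA \<pi> \<Phi>) \<le> Y" if "inA \<pi> Y" "\<Phi> Y \<le> Y" for Y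
  proof -
    have "lfpA \<pi> \<Phi> \<le> Y" using that by (rule lfpA_lower)
    then have "\<Phi> (lfpA \<pi> \<Phi>) \<le> \<Phi> Y" by (rule m)
    then show ?thesis using that(2) by (rule order_trans)
  qed
  then show ?thesis unfolding lfpA_def[of \<pi> \<Phi>] by (intro Inf_greatest) auto
qed

lemma lfpA_mono: "(\<And>Y. \<Phi> Y \<le> \<Psi> Y) \<Longrightarrow> lfpA \<pi> \<Phi> \<le> lfpA \<pi> \<Psi>"
  unfolding lfpA_def by (rule Inf_superset_mono) (auto intro: order_trans)

lemma pc_real:
  fixes p r x y :: real
  assumes "0 \<le> p" "p \<le> 1" "-r \<le> x" "-r \<le> y"
  shows "-r \<le> p*x + (1-p)*y"
proof -
  have "p*(-r) \<le> p*x" by (rule mult_left_mono) (use assms in auto)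
  moreover have "(1-p)*(-r) \<le> (1-p)*y" by (rule mult_left_mono) (use assms in auto)
  ultimately show ?thesis by (simp add: algebra_simps)
qed

lemma pc_ereal:
  fixes a b :: ereal
  assumes "0 \<le> p" "p \<le> 1" "-ereal r \<le> a" "-ereal r \<le> b"
  shows "-ereal r \<le> ereal p * a + ereal (1-p) * b"
  using assms pc_real[of p 1 r]
  by (cases a; cases b) (auto simp: pc_real)

lemma ereal_mult_SUP:
  fixes a :: "nat \<Rightarrow> ereal"
  assumes "0 \<le> r"
  shows "ereal r * (SUP i. a i) = (SUP i. ereal r * a i)"
proof (cases "r = 0")
  case True then show ?thesis by (simp add: zero_ereal_def[symmetric])
next
  case False
  then have r: "0 < r" using assms by simp
  show ?thesis
  proof (rule antisym)
    show "(SUP i. ereal r * a i) \<le> ereal r * (SUP i. a i)"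
      by (rule SUP_least, rule ereal_mult_left_mono) (use r in \<open>auto intro: SUP_upper\<close>)
    have inv: "ereal (1/r) * (ereal r * x) = x" for x
      using r by (simp add: mult.assoc[symmetric])
    have "(SUP i. a i) \<le> ereal (1/r) * (SUP i. ereal r * a i)"
    proof (rule SUP_least)
      fix i
      have "a i = ereal (1/r) * (ereal r * a i)" by (simp add: inv)
      also have "\<dots> \<le> ereal (1/r) * (SUP i. ereal r * a i)"
        by (rule ereal_mult_left_mono) (use r in \<open>auto intro: SUP_upper\<close>)
      finally show "a i \<le> ereal (1/r) * (SUP i. ereal r * a i)" .
    qed
    then have "ereal r * (SUP i. a i) \<le> ereal r * (ereal (1/r) * (SUP i. ereal r * a i))"
      by (rule ereal_mult_left_mono) (use r in auto)
    also have "\<dots> = (SUP i. ereal r * a i)"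
      using r by (simp add: mult.assoc[symmetric])
    finally show "ereal r * (SUP i. a i) \<le> (SUP i. ereal r * a i)" .
  qed
qed



lemma rat_bounds: "0 \<le> (q::rat) \<Longrightarrow> q \<le> 1 \<Longrightarrow> 0 \<le> real_of_rat q \<and> real_of_rat q \<le> 1"
  by (metis of_rat_0 of_rat_1 of_rat_less_eq)

lemma aert_inA: "wf_prog C \<Longrightarrow> inA \<pi> X \<Longrightarrow> inA \<pi> (aert \<pi> C X)"
proof (induction C arbitrary: X)
  case (Tick e)
  show ?case unfolding inA_def
  proof
    fix \<sigma>
    have "0 + - ereal (\<pi> \<sigma>) \<le> ereal (real (e (fst \<sigma>))) + X \<sigma>"
    proof (rule add_mono)
      show "- ereal (\<pi> \<sigma>) \<le> X \<sigma>" using Tick.prems(2) unfolding inA_def by blast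
    qed simp
    then show "- ereal (\<pi> \<sigma>) \<le> aert \<pi> (Tick e) X \<sigma>" by simp
  qed
next
  case (PChoice C1 p C2)
  have A: "inA \<pi> (aert \<pi> C1 X)" "inA \<pi> (aert \<pi> C2 X)" using PChoice by auto
  show ?case unfolding inA_def
  proof
    fix \<sigma> :: "'a state"
    have "0 \<le> real_of_rat (p (fst \<sigma>)) \<and> real_of_rat (p (fst \<sigma>)) \<le> 1"
      using PChoice.prems(1) by (intro rat_bounds) auto
    then show "- ereal (\<pi> \<sigma>) \<le> aert \<pi> (PChoice C1 p C2) X \<sigma>"
    proof -
      have "- ereal (\<pi> \<sigma>) \<le> aert \<pi> C1 X \<sigma>" "- ereal (\<pi> \<sigma>) \<le> aert \<pi> C2 X \<sigma>"
        using A unfolding inA_def by blast+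
      then show ?thesis using \<open>0 \<le> real_of_rat (p (fst \<sigma>)) \<and> real_of_rat (p (fst \<sigma>)) \<le> 1\<close>
        by (simp only: aert.simps) (intro pc_ereal, auto)
    qed
  qed
next
  case (If b C1 C2)
  then show ?case by (auto simp: inA_def)
next
  case (Seq C1 C2)
  then show ?case by auto
next
  case (While b C)
  then show ?case by (simp add: lfpA_inA)
qed (simp_all add: alift_inA)

lemma aert_mono: "wf_prog C \<Longrightarrow> X \<le> Y \<Longrightarrow> aert \<pi> C X \<le> aert \<pi> C Y"
proof (induction C arbitrary: X Y)
  case (Tick e)
  then show ?case by (auto simp: le_fun_def intro: add_left_mono)
next
  case (Assign x e) then show ?case by (simp add: alift_mono[OF ert_Assign_SUP])
next
  case (Alloc x e) then show ?case by (simp add: alift_mono[OF ert_Alloc_SUP])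
next
  case (Store e e') then show ?case by (simp add: alift_mono[OF ert_Store_SUP])
next
  case (Load x e) then show ?case by (simp add: alift_mono[OF ert_Load_SUP])
next
  case (Free e) then show ?case by (simp add: alift_mono[OF ert_Free_SUP])
next
  case (PChoice C1 p C2)
  have A: "aert \<pi> C1 X \<le> aert \<pi> C1 Y" "aert \<pi> C2 X \<le> aert \<pi> C2 Y" using PChoice by auto
  show ?case
  proof (rule le_funI)
    fix \<sigma> :: "'a state"
    have "0 \<le> real_of_rat (p (fst \<sigma>)) \<and> real_of_rat (p (fst \<sigma>)) \<le> 1"
      using PChoice.prems(1) by (intro rat_bounds) auto
    then show "aert \<pi> (PChoice C1 p C2) X \<sigma> \<le> aert \<pi> (PChoice C1 p C2) Y \<sigma>"
      using le_funD[OF A(1), of \<sigma>] le_funD[OF A(2), of \<sigma>] by (auto intro!: add_mono ereal_mult_left_mono)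
  qed
next
  case (If b C1 C2)
  then show ?case by (auto simp: le_fun_def)
next
  case (Seq C1 C2)
  then show ?case by auto
next
  case (While b C)
  have "(\<lambda>W \<sigma>. if b (fst \<sigma>) then aert \<pi> C W \<sigma> else X \<sigma>) Z \<le> (\<lambda>W \<sigma>. if b (fst \<sigma>) then aert \<pi> C W \<sigma> else Y \<sigma>) Z" for Z
    using le_funD[OF While.prems(2)] by (auto intro: le_funI)
  then show ?case by (simp only: aert.simps) (rule lfpA_mono)
qed

lemma aert_SUP:
  "wf_prog C \<Longrightarrow> (\<forall>i. inA \<pi> (X i)) \<Longrightarrow> incseq X \<Longrightarrow>
   aert \<pi> C (SUP i::nat. X i) = (SUP i. aert \<pi> C (X i))"
proof (induction C arbitrary: X)
  case (Tick e)
  show ?case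
  proof (rule ext)
    fix \<sigma> :: "'a state"
    show "aert \<pi> (Tick e) (SUP i. X i) \<sigma> = (SUP i. aert \<pi> (Tick e) (X i)) \<sigma>"
      by (simp only: aert.simps SUP_app) (rule SUP_ereal_add_right[symmetric], auto)
  qed
next
  case (Assign x e) then show ?case by (simp only: aert.simps) (rule alift_SUP[OF ert_Assign_SUP])
next
  case (Alloc x e) then show ?case by (simp only: aert.simps) (rule alift_SUP[OF ert_Alloc_SUP])
next
  case (Store e e') then show ?case by (simp only: aert.simps) (rule alift_SUP[OF ert_Store_SUP])
next
  case (Load x e) then show ?case by (simp only: aert.simps) (rule alift_SUP[OF ert_Load_SUP])
next
  case (Free e) then show ?case by (simp only: aert.simps) (rule alift_SUP[OF ert_Free_SUP])
next
  case (PChoice C1 p C2)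
  have wf: "wf_prog C1" "wf_prog C2" using PChoice.prems by auto
  have IH1: "aert \<pi> C1 (SUP i. X i) = (SUP i. aert \<pi> C1 (X i))"
    using PChoice.IH(1) wf PChoice.prems by blast
  have IH2: "aert \<pi> C2 (SUP i. X i) = (SUP i. aert \<pi> C2 (X i))"
    using PChoice.IH(2) wf PChoice.prems by blast
  show ?case
  proof (rule ext)
    fix \<sigma> :: "'a state"
    define q where "q = real_of_rat (p (fst \<sigma>))"
    have q: "0 \<le> q" "q \<le> 1"
      using PChoice.prems(1) rat_bounds unfolding q_def by auto
    define a where "a = (\<lambda>i. aert \<pi> C1 (X i) \<sigma>)"
    define b where "b = (\<lambda>i. aert \<pi> C2 (X i) \<sigma>)"
    have ab: "a m \<le> a n \<and> b m \<le> b n" if "m \<le> n" for m n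
    proof -
      have "X m \<le> X n" using PChoice.prems(3) that by (rule incseqD)
      then show ?thesis unfolding a_def b_def
        using le_funD[OF aert_mono[OF wf(1)]] le_funD[OF aert_mono[OF wf(2)]] by blast
    qed
    have ainc: "incseq a" "incseq b" unfolding incseq_def using ab by blast+
    have afin: "a i \<noteq> -\<infinity>" "b i \<noteq> -\<infinity>" for i
    proof -
      have "inA \<pi> (aert \<pi> C1 (X i))" "inA \<pi> (aert \<pi> C2 (X i))"
        using aert_inA wf PChoice.prems(2) by blast+
      then have "- ereal (\<pi> \<sigma>) \<le> a i" "- ereal (\<pi> \<sigma>) \<le> b i"
        unfolding a_def b_def inA_def by blast+
      then show "a i \<noteq> -\<infinity>" "b i \<noteq> -\<infinity>" by auto
    qed
    have fin2: "ereal r * a i \<noteq> -\<infinity>" "ereal r * b i \<noteq> -\<infinity>" if "0 \<le> r" for r i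
      using afin[of i] that by (cases "a i"; cases "b i"; auto)+
    have inc2: "incseq (\<lambda>i. ereal r * a i)" "incseq (\<lambda>i. ereal r * b i)" if "0 \<le> r" for r
      using ainc that unfolding incseq_def by (auto intro: ereal_mult_left_mono)
    have "aert \<pi> (PChoice C1 p C2) (SUP i. X i) \<sigma> = ereal q * (SUP i. a i) + ereal (1 - q) * (SUP i. b i)"
      by (simp only: aert.simps IH1 IH2 SUP_app a_def b_def q_def)
    also have "\<dots> = (SUP i. ereal q * a i) + (SUP i. ereal (1 - q) * b i)"
      using q by (simp add: ereal_mult_SUP)
    also have "\<dots> = (SUP i. ereal q * a i + ereal (1 - q) * b i)"
      using q(2) by (intro SUP_ereal_add[symmetric] inc2 fin2 q(1)) auto
    also have "\<dots> = (SUP i. aert \<pi> (PChoice C1 p C2) (X i)) \<sigma>"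
      by (simp only: aert.simps SUP_app a_def b_def q_def)
    finally show "aert \<pi> (PChoice C1 p C2) (SUP i. X i) \<sigma> = (SUP i. aert \<pi> (PChoice C1 p C2) (X i)) \<sigma>" .
  qed
next
  case (If b C1 C2)
  have wf: "wf_prog C1" "wf_prog C2" using If.prems by auto
  have I1: "aert \<pi> C1 (SUP i. X i) = (SUP i. aert \<pi> C1 (X i))"
    using If.IH(1) wf If.prems by blast
  have I2: "aert \<pi> C2 (SUP i. X i) = (SUP i. aert \<pi> C2 (X i))"
    using If.IH(2) wf If.prems by blast
  show ?case
  proof (rule ext)
    fix \<sigma> :: "'a state"
    show "aert \<pi> (If b C1 C2) (SUP i. X i) \<sigma> = (SUP i. aert \<pi> (If b C1 C2) (X i)) \<sigma>"
      by (cases "b (fst \<sigma>)") (simp_all only: aert.simps SUP_app I1 I2 if_True if_False)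
  qed
next
  case (Seq C1 C2)
  have wf: "wf_prog C1" "wf_prog C2" using Seq.prems by auto
  have 2: "aert \<pi> C2 (SUP i. X i) = (SUP i. aert \<pi> C2 (X i))"
    using Seq.IH(2) wf Seq.prems by blast
  have A: "\<forall>i. inA \<pi> (aert \<pi> C2 (X i))" using aert_inA wf Seq.prems by blast
  have I: "incseq (\<lambda>i. aert \<pi> C2 (X i))"
    using Seq.prems(3) aert_mono[OF wf(2)] unfolding incseq_def by auto
  show ?case by (simp only: aert.simps 2 Seq.IH(1)[OF wf(1) A I])
next
  case (While b C)
  have wf: "wf_prog C" using While.prems by auto
  define \<Phi> where "\<Phi> = (\<lambda>X Y \<sigma>. if b (fst \<sigma>) then aert \<pi> C Y \<sigma> else X \<sigma>)"
  have wh: "aert \<pi> (While b C) Z = lfpA \<pi> (\<Phi> Z)" for Z by (simp add: \<Phi>_def)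
  define L where "L = (\<lambda>i. lfpA \<pi> (\<Phi> (X i)))"
  have mono\<Phi>: "\<Phi> Z Y \<le> \<Phi> Z Y'" if "Y \<le> Y'" for Z Y Y'
    using le_funD[OF aert_mono[OF wf that]] unfolding \<Phi>_def by (intro le_funI) simp
  have \<Phi>X: "\<Phi> Z Y \<le> \<Phi> Z' Y" if "Z \<le> Z'" for Z Z' Y
    using le_funD[OF that] unfolding \<Phi>_def by (intro le_funI) simp
  have Linc: "incseq L"
    unfolding incseq_def L_def
    using While.prems(3) by (auto intro!: lfpA_mono \<Phi>X simp: incseq_def)
  have LA: "\<forall>i. inA \<pi> (L i)" unfolding L_def by (simp add: lfpA_inA)
  have Lpre: "\<Phi> (X i) (L i) \<le> L i" for i
    unfolding L_def by (rule lfpA_pre) (rule mono\<Phi>)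
  have IH: "aert \<pi> C (SUP i. L i) = (SUP i. aert \<pi> C (L i))"
    using While.IH wf LA Linc by blast
  show ?case unfolding wh
  proof (rule antisym)
    show "lfpA \<pi> (\<Phi> (SUP i. X i)) \<le> (SUP i. lfpA \<pi> (\<Phi> (X i)))"
      unfolding L_def[symmetric]
    proof (rule lfpA_lower)
      have "L 0 \<le> (SUP i. L i)" by (rule SUP_upper) simp
      then show "inA \<pi> (SUP i. L i)" using LA unfolding inA_le by (blast intro: order_trans)
      show "\<Phi> (SUP i. X i) (SUP i. L i) \<le> (SUP i. L i)"
      proof (rule le_funI)
        fix \<sigma> :: "'a state"
        have le: "\<Phi> (X i) (L i) \<sigma> \<le> L i \<sigma>" for i using le_funD[OF Lpre[of i]] .
        show "\<Phi> (SUP i. X i) (SUP i. L i) \<sigma> \<le> (SUP i. L i) \<sigma>"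
        proof (cases "b (fst \<sigma>)")
          case True
          have "\<Phi> (SUP i. X i) (SUP i. L i) \<sigma> = (SUP i. aert \<pi> C (L i) \<sigma>)"
            using True by (simp only: \<Phi>_def IH SUP_app if_True)
          also have "\<dots> \<le> (SUP i. L i \<sigma>)"
            using le True by (intro SUP_mono) (auto simp: \<Phi>_def)
          finally show ?thesis by (simp only: SUP_app)
        next
          case False
          have "\<Phi> (SUP i. X i) (SUP i. L i) \<sigma> = (SUP i. X i \<sigma>)"
            using False by (simp only: \<Phi>_def SUP_app if_False)
          also have "\<dots> \<le> (SUP i. L i \<sigma>)"
            using le False by (intro SUP_mono) (auto simp: \<Phi>_def)
          finally show ?thesis by (simp only: SUP_app)
        qed
      qed
    qed
    show "(SUP i. lfpA \<pi> (\<Phi> (X i))) \<le> lfpA \<pi> (\<Phi> (SUP i. X i))"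
      by (rule SUP_least, rule lfpA_mono, rule \<Phi>X) (auto intro: SUP_upper)
  qed
qed

theorem mainTheorem3:
  fixes \<pi> :: "'v::finite state \<Rightarrow> real"
    and C :: "'v prog"
    and X :: "nat \<Rightarrow> 'v state \<Rightarrow> ereal"
  assumes "\<forall>\<sigma>. 0 \<le> \<pi> \<sigma>"
    and "wf_prog C"
    and "\<forall>i. inA \<pi> (X i)"
    and "incseq X"
  shows "aert \<pi> C (SUP i. X i) = (SUP i. aert \<pi> C (X i))"
  using aert_SUP assms(2-4) by blast


end
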